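(* Let $V$ be a finite set with $|V|=n$, let $d$ be a monotone and consistent symmetric set function on $V$, let $\tau\in\mathbb{R}$, and let $v_1,\dots,v_n$ be a lax-back order with threshold $\tau$ for $(V,d)$. Then for every $2\leq i\leq n$, $$\min\{\tau,\lambda_{(V,d)}(v_{i-1},v_i)\}\geq\min\{\tau, d(v_i,\{v_1,\dots,v_{i-1}\})\}.$$
   Context: A symmetric set function $d$ on a finite set $V$ assigns a real number $d(S,T)$ to every ordered pair $(S,T)$ of disjoint subsets of $V$, such that $d(S,T)=d(T,S)$. It is monotone if $d(S,T')\leq d(S,T)$ whenever $S,T$ are disjoint and $T'\subseteq T$; consistent if for all pairwise disjoint $R,S,T$, $d(S,R)\geq d(T,R)$ implies $d(S,R\cup T)\geq d(S\cup R,T)$. For $s,t\in V$, $\lambda_{(V,d)}(s,t)=\min\{d(S,V\setminus S)\mid s\in S\subseteq V,\ t\notin S\}$. Singletons $\{v\}$ are written $v$. An ordering $v_1,\dots,v_n$ of $V$ is a lax-back order with threshold $\tau$ for $(V,d)$ if $\min\{\tau,d(v_i,\{v_1,\dots,v_{i-1}\})\}\geq\min\{\tau,d(v_j,\{v_1,\dots,v_{i-1}\})\}$ for all $1\leq i<j\leq n$. *)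

theory Defs
  imports Complex_Main
begin

text \<open>A set function on V: d S T for disjoint subsets S, T of V (values outside are irrelevant).\<close>

definition symmetric_setfun :: "'a set \<Rightarrow> ('a set \<Rightarrow> 'a set \<Rightarrow> real) \<Rightarrow> bool" where
  "symmetric_setfun V d \<longleftrightarrow>
     (\<forall>S T. S \<subseteq> V \<and> T \<subseteq> V \<and> S \<inter> T = {} \<longrightarrow> d S T = d T S)"

definition monotone_setfun :: "'a set \<Rightarrow> ('a set \<Rightarrow> 'a set \<Rightarrow> real) \<Rightarrow> bool" where
  "monotone_setfun V d \<longleftrightarrow>
     (\<forall>S T T'. S \<subseteq> V \<and> T \<subseteq> V \<and> S \<inter> T = {} \<and> T' \<subseteq> T \<longrightarrow> d S T' \<le> d S T)"

definition consistent_setfun :: "'a set \<Rightarrow> ('a set \<Rightarrow> 'a set \<Rightarrow> real) \<Rightarrow> bool" where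
  "consistent_setfun V d \<longleftrightarrow>
     (\<forall>R S T. R \<subseteq> V \<and> S \<subseteq> V \<and> T \<subseteq> V \<and> R \<inter> S = {} \<and> R \<inter> T = {} \<and> S \<inter> T = {} \<longrightarrow>
        d S R \<ge> d T R \<longrightarrow> d S (R \<union> T) \<ge> d (S \<union> R) T)"

definition lambda_conn :: "'a set \<Rightarrow> ('a set \<Rightarrow> 'a set \<Rightarrow> real) \<Rightarrow> 'a \<Rightarrow> 'a \<Rightarrow> real" where
  "lambda_conn V d s t = Min {d S (V - S) | S. s \<in> S \<and> S \<subseteq> V \<and> t \<notin> S}"

text \<open>An ordering v_1..v_n of V is represented as a distinct list vs with set vs = V;
  v_(i+1) = vs ! i and {v_1..v_i} = set (take i vs).\<close>

definition lax_back_order :: "'a set \<Rightarrow> ('a set \<Rightarrow> 'a set \<Rightarrow> real) \<Rightarrow> real \<Rightarrow> 'a list \<Rightarrow> bool" where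
  "lax_back_order V d \<tau> vs \<longleftrightarrow> distinct vs \<and> set vs = V \<and>
     (\<forall>i j. i < j \<and> j < length vs \<longrightarrow>
        min \<tau> (d {vs ! i} (set (take i vs))) \<ge> min \<tau> (d {vs ! j} (set (take i vs))))"

end

theory Submission
  imports Defs
begin

lemma nth_in_take_iff:
  assumes "distinct xs" "k < length xs" "n \<le> length xs"
  shows "(xs!k \<in> set (take n xs)) = (k < n)"
proof -
  have "set (take n xs) = (!) xs ` {0..<n}" using assms(3) by (simp add: nth_image)
  then show ?thesis using assms by (auto simp: nth_eq_iff_index_eq)
qed

lemma min_trans_le:
  fixes t a b c :: real
  shows "min t a \<le> min t b \<Longrightarrow> b \<le> c \<Longrightarrow> min t a \<le> min t c"
  by linarith

lemma min_thr:
  fixes t a b :: real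
  shows "min t a \<le> min t b \<Longrightarrow> b < a \<Longrightarrow> t \<le> b"
  by linarith

lemma mono2:
  assumes "monotone_setfun V d" "S \<subseteq> V" "T \<subseteq> V" "S \<inter> T = {}" "T' \<subseteq> T"
  shows "d S T' \<le> d S T"
  using assms unfolding monotone_setfun_def by blast

lemma mono1:
  assumes "monotone_setfun V d" "symmetric_setfun V d" "S \<subseteq> V" "T \<subseteq> V" "S \<inter> T = {}" "S' \<subseteq> S"
  shows "d S' T \<le> d S T"
proof -
  have sy: "\<And>X Y. X \<subseteq> V \<Longrightarrow> Y \<subseteq> V \<Longrightarrow> X \<inter> Y = {} \<Longrightarrow> d X Y = d Y X"
    using assms(2) unfolding symmetric_setfun_def by blast
  have S'V: "S' \<subseteq> V" using assms(3,6) by (rule order_trans[rotated])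
  have TS: "T \<inter> S = {}" using assms(5) by (simp add: Int_commute)
  have S'T: "S' \<inter> T = {}" using assms(5,6) by blast
  have "d T S' \<le> d T S" by (rule mono2[OF assms(1,4,3) TS assms(6)])
  moreover have "d T S' = d S' T" by (rule sy[OF assms(4) S'V]) (use S'T in blast)
  moreover have "d T S = d S T" by (rule sy[OF assms(4,3) TS])
  ultimately show ?thesis by simp
qed

lemma claim:
  assumes sym: "symmetric_setfun V d" and mon: "monotone_setfun V d"
    and con: "consistent_setfun V d" and lb: "lax_back_order V d \<tau> vs"
  shows "m < length vs \<Longrightarrow> 1 \<le> m \<Longrightarrow> A \<union> B = set (take (Suc m) vs) \<Longrightarrow> A \<inter> B = {}
    \<Longrightarrow> vs!(m-1) \<in> A \<Longrightarrow> vs!m \<in> B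
    \<Longrightarrow> min \<tau> (d {vs!m} (set (take m vs))) \<le> min \<tau> (d A B)"
proof (induction m arbitrary: A B rule: less_induct)
  case (less m A B)
  have dist: "distinct vs" and setV: "set vs = V"
    and lbr: "\<And>i j. i < j \<Longrightarrow> j < length vs \<Longrightarrow>
        min \<tau> (d {vs ! i} (set (take i vs))) \<ge> min \<tau> (d {vs ! j} (set (take i vs)))"
    using lb unfolding lax_back_order_def by auto
  have tV: "\<And>n. set (take n vs) \<subseteq> V" using setV by (meson set_take_subset)
  have AV: "A \<subseteq> V" and BV: "B \<subseteq> V" using less.prems(3) tV by blast+
  have tS: "set (take (Suc m) vs) = insert (vs!m) (set (take m vs))"
    using less.prems(1) by (simp add: take_Suc_conv_app_nth)
  have vmn: "vs!m \<notin> set (take m vs)" using nth_in_take_iff[OF dist less.prems(1)] less.prems(1) by simp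
  define B' where "B' = B - {vs!m}"
  have vmA: "vs!m \<notin> A" using less.prems(4,6) by blast
  have AB'm: "A \<union> B' = set (take m vs)"
  proof -
    have "A \<union> B' = (A \<union> B) - {vs!m}" using vmA unfolding B'_def by blast
    also have "\<dots> = set (take m vs)" using less.prems(3) tS vmn by simp
    finally show ?thesis .
  qed
  have BB': "B = insert (vs!m) B'" using less.prems(6) unfolding B'_def by blast
  have symAB: "\<And>X Y. X \<subseteq> V \<Longrightarrow> Y \<subseteq> V \<Longrightarrow> X \<inter> Y = {} \<Longrightarrow> d X Y = d Y X"
    using sym unfolding symmetric_setfun_def by blast
  show ?case
  proof (cases "B' = {}")
    case True
    then have "A = set (take m vs)" "B = {vs!m}" using AB'm BB' by auto
    then show ?thesis using symAB[OF AV BV less.prems(4)] by simp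
  next
    case False
    define J where "J = {l. l < m \<and> vs!l \<in> B}"
    have finJ: "finite J" unfolding J_def by simp
    obtain x where xB': "x \<in> B'" using False by blast
    then have "x \<in> set (take m vs)" using AB'm by blast
    then obtain l where l: "l < m" "x = vs!l" using less.prems(1)
      by (metis in_set_conv_nth length_take min.absorb2 less_imp_le_nat nth_take)
    then have "l \<in> J" using xB' unfolding J_def B'_def by blast
    then have Jne: "J \<noteq> {}" by blast
    define j where "j = Max J"
    have jJ: "j \<in> J" using finJ Jne unfolding j_def by simp
    have jm: "j < m" and vjB: "vs!j \<in> B" using jJ unfolding J_def by auto
    have jmax: "\<And>l. l < m \<Longrightarrow> vs!l \<in> B \<Longrightarrow> l \<le> j"
      using finJ unfolding j_def J_def by simp
    have "j \<noteq> m - 1" using vjB less.prems(4,5) by blast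
    then have j1m: "Suc j < m" using jm by linarith
    have lenm: "m \<le> length vs" using less.prems(1) by simp
    have vj1A: "vs!(Suc j) \<in> A"
    proof -
      have "vs!(Suc j) \<in> set (take (Suc m) vs)"
        using nth_in_take_iff[OF dist, of "Suc j" "Suc m"] j1m less.prems(1) by simp
      moreover have "vs!(Suc j) \<notin> B" using jmax[of "Suc j"] j1m by fastforce
      ultimately show ?thesis using less.prems(3) by blast
    qed
    have B'sub: "B' \<subseteq> set (take (Suc j) vs)"
    proof
      fix y assume yB': "y \<in> B'"
      then have "y \<in> set (take m vs)" using AB'm by blast
      then obtain l where l: "l < m" "y = vs!l" using less.prems(1)
        by (metis in_set_conv_nth length_take min.absorb2 less_imp_le_nat nth_take)
      then have "l \<le> j" using jmax yB' unfolding B'_def by blast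
      then show "y \<in> set (take (Suc j) vs)"
        using nth_in_take_iff[OF dist, of l "Suc j"] l less.prems(1) j1m by simp
    qed
    define A1 where "A1 = A \<inter> set (take (Suc (Suc j)) vs)"
    have ss: "set (take (Suc (Suc j)) vs) \<subseteq> set (take (Suc m) vs)"
      using j1m by (metis Suc_leI less_imp_le_nat set_take_subset_set_take Suc_le_mono)
    have vmnot: "vs!m \<notin> set (take (Suc (Suc j)) vs)"
      using nth_in_take_iff[OF dist less.prems(1), of "Suc (Suc j)"] j1m less.prems(1) by simp
    have cov: "B' \<union> A1 = set (take (Suc (Suc j)) vs)"
    proof
      show "B' \<union> A1 \<subseteq> set (take (Suc (Suc j)) vs)"
      proof -
        have "set (take (Suc j) vs) \<subseteq> set (take (Suc (Suc j)) vs)"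
          by (rule set_take_subset_set_take) simp
        then show ?thesis using B'sub unfolding A1_def by blast
      qed
      show "set (take (Suc (Suc j)) vs) \<subseteq> B' \<union> A1"
      proof
        fix y assume y: "y \<in> set (take (Suc (Suc j)) vs)"
        then have "y \<in> A \<union> B" using ss less.prems(3) by blast
        moreover have "y \<noteq> vs!m" using y vmnot by blast
        ultimately show "y \<in> B' \<union> A1" using y unfolding A1_def B'_def by blast
      qed
    qed
    have disj: "B' \<inter> A1 = {}" using less.prems(4) unfolding A1_def B'_def by blast
    have vjB': "vs!(Suc j - 1) \<in> B'"
    proof -
      have "vs!j \<noteq> vs!m" using dist jm less.prems(1) by (simp add: nth_eq_iff_index_eq)
      then show ?thesis using vjB unfolding B'_def by simp
    qed
    have vj1A1: "vs!(Suc j) \<in> A1"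
      using vj1A nth_in_take_iff[OF dist, of "Suc j" "Suc (Suc j)"] j1m less.prems(1)
      unfolding A1_def by simp
    have IH: "min \<tau> (d {vs!Suc j} (set (take (Suc j) vs))) \<le> min \<tau> (d B' A1)"
    proof -
      have a: "Suc j < m" "Suc j < length vs" "1 \<le> Suc j" using j1m less.prems(1) by auto
      show ?thesis using less.IH[OF a cov disj vjB' vj1A1] .
    qed
    have t1V: "set (take (Suc j) vs) \<subseteq> V" using tV by blast
    have vmV: "{vs!m} \<subseteq> V" using setV less.prems(1) by auto
    have vmt1: "{vs!m} \<inter> set (take (Suc j) vs) = {}"
      using nth_in_take_iff[OF dist less.prems(1), of "Suc j"] j1m less.prems(1) by simp
    have lax: "min \<tau> (d {vs!m} (set (take (Suc j) vs))) \<le> min \<tau> (d {vs!Suc j} (set (take (Suc j) vs)))"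
      using lbr[of "Suc j" m] j1m less.prems(1) by simp
    have m1: "d {vs!m} B' \<le> d {vs!m} (set (take (Suc j) vs))"
      using mono2[OF mon vmV t1V vmt1 B'sub] .
    have B'V: "B' \<subseteq> V" using BV unfolding B'_def by blast
    have B'A: "B' \<inter> A = {}" using less.prems(4) unfolding B'_def by blast
    have m2: "d B' A1 \<le> d B' A" using mono2[OF mon B'V AV B'A] unfolding A1_def by blast
    have s2: "d B' A = d A B'" using symAB[OF B'V AV B'A] .
    have AB'd: "A \<inter> B' = {}" using B'A by blast
    have m3: "d A B' \<le> d A B" using mono2[OF mon AV BV less.prems(4)] unfolding B'_def by blast
    show ?thesis
    proof (cases "d {vs!m} B' \<le> d A B'")
      case True
      have "d (A \<union> B') {vs!m} \<le> d A (B' \<union> {vs!m})"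
      proof -
        have c: "\<And>R S T. R \<subseteq> V \<Longrightarrow> S \<subseteq> V \<Longrightarrow> T \<subseteq> V \<Longrightarrow> R \<inter> S = {} \<Longrightarrow> R \<inter> T = {}
          \<Longrightarrow> S \<inter> T = {} \<Longrightarrow> d S R \<ge> d T R \<Longrightarrow> d S (R \<union> T) \<ge> d (S \<union> R) T"
          using con unfolding consistent_setfun_def by blast
        have "B' \<inter> {vs!m} = {}" "A \<inter> {vs!m} = {}" using vmA unfolding B'_def by auto
        then show ?thesis using c[OF B'V AV vmV B'A _ _ True] by blast
      qed
      moreover have "B' \<union> {vs!m} = B" using BB' by blast
      moreover have "d (A \<union> B') {vs!m} = d {vs!m} (set (take m vs))"
        using AB'm symAB[of "set (take m vs)" "{vs!m}"] tV vmV vmn by auto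
      ultimately have "d {vs!m} (set (take m vs)) \<le> d A B" by simp
      then show ?thesis by linarith
    next
      case False
      have "min \<tau> (d {vs!m} B') \<le> min \<tau> (d {vs!Suc j} (set (take (Suc j) vs)))"
        using lax m1 by linarith
      then have "min \<tau> (d {vs!m} B') \<le> min \<tau> (d B' A1)" using IH by linarith
      then have "min \<tau> (d {vs!m} B') \<le> min \<tau> (d A B')" using m2 s2 by linarith
      then have "\<tau> \<le> d A B'" using False by linarith
      then show ?thesis using m3 by linarith
    qed
  qed
qed

theorem lemma5:
  fixes V :: "'a set" and d :: "'a set \<Rightarrow> 'a set \<Rightarrow> real" and \<tau> :: real and vs :: "'a list"
  assumes "finite V"
    and "symmetric_setfun V d"
    and "monotone_setfun V d"
    and "consistent_setfun V d"
    and "lax_back_order V d \<tau> vs"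
    and "2 \<le> i" and "i \<le> length vs"
  shows "min \<tau> (lambda_conn V d (vs ! (i - 2)) (vs ! (i - 1)))
           \<ge> min \<tau> (d {vs ! (i - 1)} (set (take (i - 1) vs)))"
proof -
  obtain k where ik: "i = Suc (Suc k)" using assms(6) by (metis add_2_eq_Suc le_Suc_ex)
  have e: "i - 2 = k" "i - 1 = Suc k" using ik by auto
  have kl: "Suc k < length vs" using assms(7) ik by simp
  have dist: "distinct vs" and setV: "set vs = V" using assms(5) unfolding lax_back_order_def by blast+
  define C where "C = {d S (V - S) | S. vs ! k \<in> S \<and> S \<subseteq> V \<and> vs ! (Suc k) \<notin> S}"
  have "C \<subseteq> (\<lambda>S. d S (V - S)) ` Pow V" unfolding C_def by blast
  moreover have "finite ((\<lambda>S. d S (V - S)) ` Pow V)" using assms(1) by simp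
  ultimately have finC: "finite C" by (rule finite_subset)
  have ne: "vs ! (Suc k) \<noteq> vs ! k" using dist kl nth_eq_iff_index_eq[OF dist, of "Suc k" k] by simp
  have v2V: "vs ! k \<in> V" using setV kl by (metis Suc_lessD nth_mem)
  have "d {vs ! k} (V - {vs ! k}) \<in> C" unfolding C_def using ne v2V by blast
  then have "C \<noteq> {}" by blast
  then have "Min C \<in> C" using finC by (rule Min_in[rotated])
  then obtain S where S: "Min C = d S (V - S)" "vs ! k \<in> S" "S \<subseteq> V" "vs ! (Suc k) \<notin> S"
    unfolding C_def by blast
  have lam: "lambda_conn V d (vs ! k) (vs ! (Suc k)) = d S (V - S)"
    using S(1) unfolding lambda_conn_def C_def by simp
  define A where "A = S \<inter> set (take (Suc (Suc k)) vs)"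
  define B where "B = set (take (Suc (Suc k)) vs) - S"
  have tV: "set (take (Suc (Suc k)) vs) \<subseteq> V" using setV by (meson set_take_subset)
  have f1: "min \<tau> (d {vs!Suc k} (set (take (Suc k) vs))) \<le> min \<tau> (d A B)"
  proof (rule claim[OF assms(2,3,4,5)])
    show "Suc k < length vs" "1 \<le> Suc k" using kl by auto
    show "A \<union> B = set (take (Suc (Suc k)) vs)" "A \<inter> B = {}" unfolding A_def B_def by auto
    have "vs ! k \<in> set (take (Suc (Suc k)) vs)" using nth_in_take_iff[OF dist, of k "Suc (Suc k)"] kl by simp
    then show "vs ! (Suc k - 1) \<in> A" unfolding A_def using S(2) by simp
    have "vs ! Suc k \<in> set (take (Suc (Suc k)) vs)" using nth_in_take_iff[OF dist, of "Suc k" "Suc (Suc k)"] kl by simp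
    then show "vs ! Suc k \<in> B" unfolding B_def using S(4) by simp
  qed
  have f2: "d A B \<le> d A (V - S)"
  proof (rule mono2[OF assms(3)])
    show "A \<subseteq> V" "V - S \<subseteq> V" "A \<inter> (V - S) = {}" "B \<subseteq> V - S" using tV unfolding A_def B_def by auto
  qed
  have f3: "d A (V - S) \<le> d S (V - S)"
  proof (rule mono1[OF assms(3,2)])
    show "S \<subseteq> V" "V - S \<subseteq> V" "S \<inter> (V - S) = {}" "A \<subseteq> S" using S(3) unfolding A_def by auto
  qed
  have "min \<tau> (d {vs!Suc k} (set (take (Suc k) vs))) \<le> min \<tau> (d S (V - S))"
    by (rule min_trans_le[OF f1 order_trans[OF f2 f3]])
  then show ?thesis unfolding e lam .
qed

end
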